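(* Let $d\ge1$ and $1\le p<\infty$, and suppose $\tilde S$ is bounded from $L^p(\mathbb{R}^d)$ to $L^{p,\infty}(\mathbb{R}^d)$ (unweighted). Let $w$ be a weight satisfying the $A_\infty$ condition with constants $C_w$ and $\delta\in(0,1]$. Then for all $\lambda>0$, $A>1$, $\gamma>0$ and all $f$ (for which $\{\tilde Sf>\lambda\}$ has finite Lebesgue measure), $$w\{x:\tilde Sf(x)>A\lambda,\ M^\sharp_pf(x)\le\gamma\lambda\}\le C\,C_w\Big(\frac{\gamma}{A-1}\Big)^{p\delta}w\{x:\tilde Sf(x)>\lambda\},$$ where $C$ depends only on $p$, $d$ and the $L^p\to L^{p,\infty}$ norm of $\tilde S$.
   Context: $A_tf(x)=\frac{1}{|B(0,t)|}\int_{B(0,t)}f(x+y)\,dy$. $V^2(a_t)_{t\in I}=\sup_{t\in I}|a_t|+\sup_{t_0<\dots<t_J\in I}(\sum_{j=1}^J|a_{t_j}-a_{t_{j-1}}|^2)^{1/2}$. $\mathcal{Q}_k$: dyadic cubes of side $2^k$; $\mathcal{Q}_k(x)$ the one containing $x$; $3\mathcal{Q}_k(x)$ its concentric triple; $E_k$ conditional expectation onto the $\sigma$-algebra generated by $\mathcal{Q}_k$. $S_kf(x)=V^2(A_tf(x)-E_kf(x))_{2^k\le t\le2^{k+1}}$, $\tilde S_kf(x)=\sup_{y\in3\mathcal{Q}_k(x)}S_kf(y)$, $\tilde Sf=(\sum_k(\tilde S_kf)^2)^{1/2}$. A weight $w$ satisfies the $A_\infty$ condition if $w(E)/w(Q)\le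 C_w(|E|/|Q|)^\delta$ for all cubes $Q$ and measurable $E\subset Q$. $M^\sharp_pf(x)=\sup_{Q\ni x}\inf_{c}(\frac1{|Q|}\int_Q|f-c|^p)^{1/p}$, supremum over cubes containing $x$. *)

theory Defs
  imports "HOL-Analysis.Analysis"
begin

definition enn_root :: "real \<Rightarrow> ennreal \<Rightarrow> ennreal" where
  "enn_root p x = (if x = \<infinity> then \<infinity> else ennreal (enn2real x powr (1 / p)))"

definition avg :: "'a::euclidean_space set \<Rightarrow> ('a \<Rightarrow> real) \<Rightarrow> real" where
  "avg S f = (LINT y:S|lebesgue. f y) / measure lebesgue S"

definition ball_avg :: "real \<Rightarrow> ('a::euclidean_space \<Rightarrow> real) \<Rightarrow> 'a \<Rightarrow> real" where
  "ball_avg t f x = (LINT y:ball 0 t|lebesgue. f (x + y)) / measure lebesgue (ball (0::'a) t)"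

definition V2 :: "(real \<Rightarrow> real) \<Rightarrow> real set \<Rightarrow> ennreal" where
  "V2 a I = (SUP t\<in>I. ennreal \<bar>a t\<bar>) +
     (SUP (J, ts) \<in> {(J, ts). J \<ge> (1::nat) \<and> (\<forall>j\<le>J. ts j \<in> I) \<and> (\<forall>j<J. ts j < ts (Suc j))}.
        ennreal (sqrt (\<Sum>j=1..J. \<bar>a (ts j) - a (ts (j - 1))\<bar>\<^sup>2)))"

definition dcube :: "int \<Rightarrow> 'a::euclidean_space \<Rightarrow> 'a set" where
  "dcube k x = {y. \<forall>i\<in>Basis. \<lfloor>(y \<bullet> i) / 2 powr k\<rfloor> = \<lfloor>(x \<bullet> i) / 2 powr k\<rfloor>}"

text \<open>Concentric triple of the dyadic cube of side 2^k containing x.\<close>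
definition dcube3 :: "int \<Rightarrow> 'a::euclidean_space \<Rightarrow> 'a set" where
  "dcube3 k x = {y. \<forall>i\<in>Basis. \<bar>\<lfloor>(y \<bullet> i) / 2 powr k\<rfloor> - \<lfloor>(x \<bullet> i) / 2 powr k\<rfloor>\<bar> \<le> 1}"

definition Ek :: "int \<Rightarrow> ('a::euclidean_space \<Rightarrow> real) \<Rightarrow> 'a \<Rightarrow> real" where
  "Ek k f x = avg (dcube k x) f"

definition Sk :: "int \<Rightarrow> ('a::euclidean_space \<Rightarrow> real) \<Rightarrow> 'a \<Rightarrow> ennreal" where
  "Sk k f x = V2 (\<lambda>t. ball_avg t f x - Ek k f x) {2 powr k .. 2 powr (k + 1)}"

definition Sk_tilde :: "int \<Rightarrow> ('a::euclidean_space \<Rightarrow> real) \<Rightarrow> 'a \<Rightarrow> ennreal" where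
  "Sk_tilde k f x = (SUP y\<in>dcube3 k x. Sk k f y)"

definition S_tilde :: "('a::euclidean_space \<Rightarrow> real) \<Rightarrow> 'a \<Rightarrow> ennreal" where
  "S_tilde f x = enn_root 2 (\<Sum>\<^sub>\<infinity>k\<in>(UNIV::int set). (Sk_tilde k f x)\<^sup>2)"

definition cube :: "'a::euclidean_space \<Rightarrow> real \<Rightarrow> 'a set" where
  "cube a s = box a (a + (\<Sum>i\<in>Basis. s *\<^sub>R i))"

definition sharp_max :: "real \<Rightarrow> ('a::euclidean_space \<Rightarrow> real) \<Rightarrow> 'a \<Rightarrow> ennreal" where
  "sharp_max p f x = (SUP (a, s) \<in> {(a, s). s > 0 \<and> x \<in> cube a s}.
      (INF c::real. enn_root p ((\<integral>\<^sup>+ y\<in>cube a s. ennreal (\<bar>f y - c\<bar> powr p) \<partial>lebesgue)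
                                / emeasure lebesgue (cube a s))))"

definition wmeasure :: "('a::euclidean_space \<Rightarrow> real) \<Rightarrow> 'a set \<Rightarrow> ennreal" where
  "wmeasure w E = (\<integral>\<^sup>+ x\<in>E. ennreal (w x) \<partial>lebesgue)"

definition weight :: "('a::euclidean_space \<Rightarrow> real) \<Rightarrow> bool" where
  "weight w \<longleftrightarrow> w \<in> borel_measurable lebesgue \<and> (\<forall>x. 0 \<le> w x) \<and>
     (\<forall>K. compact K \<longrightarrow> wmeasure w K < \<infinity>)"

definition A_infty :: "('a::euclidean_space \<Rightarrow> real) \<Rightarrow> real \<Rightarrow> real \<Rightarrow> bool" where
  "A_infty w Cw \<delta> \<longleftrightarrow> weight w \<and>
     (\<forall>a s E. s > 0 \<longrightarrow> E \<in> sets lebesgue \<longrightarrow> E \<subseteq> cube a s \<longrightarrow>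
        wmeasure w E \<le> ennreal (Cw * (measure lebesgue E / measure lebesgue (cube a s)) powr \<delta>)
                         * wmeasure w (cube a s))"

definition Lp_fun :: "real \<Rightarrow> ('a::euclidean_space \<Rightarrow> real) \<Rightarrow> bool" where
  "Lp_fun p f \<longleftrightarrow> f \<in> borel_measurable lebesgue \<and>
     (\<integral>\<^sup>+ x. ennreal (\<bar>f x\<bar> powr p) \<partial>lebesgue) < \<infinity>"

definition locally_integrable :: "('a::euclidean_space \<Rightarrow> real) \<Rightarrow> bool" where
  "locally_integrable f \<longleftrightarrow> (\<forall>K. compact K \<longrightarrow> set_integrable lebesgue K f)"

end

theory Submission
  imports Defs
begin


lemma floor_div_int_pos:
  fixes u :: real and n :: int assumes n: "n > 0"
  shows "\<lfloor>u / of_int n\<rfloor> = \<lfloor>u\<rfloor> div n"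
proof -
  define m where "m = \<lfloor>u\<rfloor>"
  define q where "q = m div n"
  have "q * n \<le> m" unfolding q_def using n by (metis div_mult_mod_eq le_add_same_cancel1 pos_mod_sign)
  moreover have "m < (q+1) * n" unfolding q_def using n
    by (metis add.commute distrib_right div_mult_mod_eq mult_1 pos_mod_bound add_less_cancel_left)
  ultimately have a1: "real_of_int q * of_int n \<le> u" unfolding m_def by (metis le_floor_iff of_int_mult)
  have "m + 1 \<le> (q+1)*n" using \<open>m < (q+1) * n\<close> by simp
  then have "real_of_int (m+1) \<le> real_of_int ((q+1)*n)" by linarith
  moreover have "u < real_of_int m + 1" unfolding m_def by linarith
  ultimately have a2: "u < real_of_int (q+1) * of_int n" by simp
  note a = a1 a2
  have "of_int q \<le> u / of_int n" using a n by (simp add: pos_le_divide_eq)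
  moreover have "u / of_int n < of_int q + 1" using a n by (simp add: pos_divide_less_eq)
  ultimately show ?thesis unfolding q_def m_def[symmetric] by (simp add: floor_eq_iff m_def q_def)
qed

lemma floor_dyadic_nest:
  fixes u :: real assumes "j \<le> k"
  shows "\<lfloor>u / 2 powr k\<rfloor> = \<lfloor>u / 2 powr j\<rfloor> div (2 ^ nat (k - j))"
proof -
  have "2 powr k = 2 powr j * of_int (2 ^ nat (k - j))"
    using assms by (simp add: powr_realpow[symmetric] powr_add[symmetric])
  then have "u / 2 powr k = (u / 2 powr j) / of_int (2 ^ nat (k - j))" by simp
  then show ?thesis using floor_div_int_pos[of "2 ^ nat (k - j)" "u / 2 powr j"] by (metis of_int_numeral of_int_power zero_less_numeral zero_less_power)
qed

lemma mem_dcube[simp]: "x \<in> dcube k x" by (simp add: dcube_def)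

lemma dcube_eq: "y \<in> dcube k x \<Longrightarrow> dcube k y = dcube k x"
  by (auto simp: dcube_def)

lemma dcube3_eq: "y \<in> dcube k x \<Longrightarrow> dcube3 k y = dcube3 k x"
  by (auto simp: dcube_def dcube3_def)

lemma Sk_tilde_eq: "y \<in> dcube k x \<Longrightarrow> Sk_tilde k f y = Sk_tilde k f x"
  by (simp add: Sk_tilde_def dcube3_eq)

lemma dcube_mono: "j \<le> k \<Longrightarrow> dcube j x \<subseteq> dcube k x"
  unfolding dcube_def using floor_dyadic_nest by auto

lemma dcube_nested: "z \<in> dcube j x \<Longrightarrow> z \<in> dcube k y \<Longrightarrow> j \<le> k \<Longrightarrow> dcube j x \<subseteq> dcube k y"
  by (metis dcube_eq dcube_mono)

lemma dcube_alt: "dcube k x = {y. \<forall>i\<in>Basis. of_int \<lfloor>x\<bullet>i/2 powr k\<rfloor> * 2 powr k \<le> y\<bullet>i \<and>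
     y\<bullet>i < (of_int \<lfloor>x\<bullet>i/2 powr k\<rfloor> + 1) * 2 powr k}"
  unfolding dcube_def by (auto simp: floor_eq_iff pos_le_divide_eq pos_divide_less_eq)

lemma dcube_borel: "dcube k x \<in> sets borel"
  unfolding dcube_alt by measurable

lemma dcube_lebesgue[measurable]: "dcube k x \<in> sets lebesgue"
  by (rule sets_completionI_sets) (simp add: dcube_borel)



definition dcorner :: "int \<Rightarrow> 'a::euclidean_space \<Rightarrow> 'a" where
  "dcorner k x = (\<Sum>i\<in>Basis. (of_int \<lfloor>x\<bullet>i/2 powr k\<rfloor> * 2 powr k) *\<^sub>R i)"

lemma dcorner_inner: "i \<in> Basis \<Longrightarrow> dcorner k x \<bullet> i = of_int \<lfloor>x\<bullet>i/2 powr k\<rfloor> * 2 powr k"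
  by (simp add: dcorner_def inner_sum_left inner_Basis if_distrib cong: if_cong)

lemma ones_inner: "i \<in> Basis \<Longrightarrow> (\<Sum>j\<in>Basis. s *\<^sub>R j) \<bullet> i = (s::real)"
  by (simp add: inner_sum_left inner_Basis if_distrib cong: if_cong)

lemma dcube_corner: "dcube k x = {y. \<forall>i\<in>Basis. dcorner k x \<bullet> i \<le> y\<bullet>i \<and> y\<bullet>i < dcorner k x \<bullet> i + 2 powr k}"
  unfolding dcube_alt by (auto simp: dcorner_inner algebra_simps)

lemma dcorner_eq: "y \<in> dcube k x \<Longrightarrow> dcorner k y = dcorner k x"
  by (simp add: dcorner_def dcube_def)

lemma box_sub_dcube: "cube (dcorner k x) (2 powr k) \<subseteq> dcube k x"
  unfolding cube_def dcube_corner by (auto simp: mem_box ones_inner inner_add_left less_imp_le)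

lemma dcube_sub_cbox: "dcube k x \<subseteq> cbox (dcorner k x) (dcorner k x + (\<Sum>i\<in>Basis. 2 powr k *\<^sub>R i))"
  unfolding dcube_corner by (auto simp: mem_box ones_inner inner_add_left less_imp_le)

lemma emeasure_cube: "s \<ge> 0 \<Longrightarrow> emeasure lebesgue (cube (a::'a) s) = ennreal (s ^ DIM('a::euclidean_space))"
  unfolding cube_def
  by (simp add: emeasure_completion emeasure_lborel_box_eq ones_inner inner_add_left prod_constant)

lemma emeasure_cbox_ones: "s \<ge> 0 \<Longrightarrow> emeasure lebesgue (cbox (a::'a) (a + (\<Sum>i\<in>Basis. s *\<^sub>R i))) = ennreal (s ^ DIM('a::euclidean_space))"
  by (simp add: emeasure_completion emeasure_lborel_cbox_eq ones_inner inner_add_left prod_constant)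

lemma cube_lebesgue[measurable]: "cube a s \<in> sets lebesgue"
  unfolding cube_def by simp

lemma measure_cube: "s \<ge> 0 \<Longrightarrow> measure lebesgue (cube (a::'a) s) = s ^ DIM('a::euclidean_space)"
  unfolding measure_def by (subst emeasure_cube) auto

lemma emeasure_dcube: "emeasure lebesgue (dcube k (x::'a)) = ennreal ((2 powr k) ^ DIM('a::euclidean_space))"
proof (rule antisym)
  show "emeasure lebesgue (dcube k x) \<le> ennreal ((2 powr k) ^ DIM('a))"
  proof -
    have "emeasure lebesgue (dcube k x) \<le> emeasure lebesgue (cbox (dcorner k x) (dcorner k x + (\<Sum>i\<in>Basis. 2 powr k *\<^sub>R i)))"
      by (rule emeasure_mono[OF dcube_sub_cbox]) simp
    then show ?thesis using emeasure_cbox_ones[of "2 powr k" "dcorner k x"] by simp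
  qed
  show "ennreal ((2 powr k) ^ DIM('a)) \<le> emeasure lebesgue (dcube k x)"
  proof -
    have "emeasure lebesgue (cube (dcorner k x) (2 powr k)) \<le> emeasure lebesgue (dcube k x)"
      by (rule emeasure_mono[OF box_sub_dcube]) simp
    then show ?thesis using emeasure_cube[of "2 powr k" "dcorner k x"] by simp
  qed
qed

lemma measure_dcube: "measure lebesgue (dcube k (x::'a)) = (2 powr k) ^ DIM('a::euclidean_space)"
  unfolding measure_def by (subst emeasure_dcube) auto

lemma dcube_diff_null: "dcube k x - cube (dcorner k x) (2 powr k) \<in> null_sets lebesgue"
proof -
  have "dcube k x - cube (dcorner k x) (2 powr k) \<subseteq> cbox (dcorner k x) (dcorner k x + (\<Sum>i\<in>Basis. 2 powr k *\<^sub>R i)) - box (dcorner k x) (dcorner k x + (\<Sum>i\<in>Basis. 2 powr k *\<^sub>R i))"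
    using dcube_sub_cbox unfolding cube_def by blast
  moreover have "cbox (dcorner k x) (dcorner k x + (\<Sum>i\<in>Basis. 2 powr k *\<^sub>R i)) - box (dcorner k x) (dcorner k x + (\<Sum>i\<in>Basis. 2 powr k *\<^sub>R i)) \<in> null_sets lebesgue"
    by (rule null_sets_completionI[OF null_sets_cbox_Diff_box])
  ultimately show ?thesis
    by (rule completion.complete2)
qed



definition Tsum :: "('a::euclidean_space \<Rightarrow> real) \<Rightarrow> 'a \<Rightarrow> ennreal" where
  "Tsum f x = (\<Sum>\<^sub>\<infinity>k\<in>(UNIV::int set). (Sk_tilde k f x)\<^sup>2)"

lemma ennreal_summable[simp]: "(g :: _ \<Rightarrow> ennreal) summable_on A"
  by (simp add: nonneg_summable_on_complete)

lemma S_tilde_Tsum: "S_tilde f x = enn_root 2 (Tsum f x)"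
  by (simp add: S_tilde_def Tsum_def)

lemma S_tilde_gt_iff:
  assumes "\<mu> \<ge> 0"
  shows "S_tilde f x > ennreal \<mu> \<longleftrightarrow> Tsum f x > ennreal (\<mu>\<^sup>2)"
proof (cases "Tsum f x" rule: ennreal_cases)
  case top then show ?thesis by (simp add: S_tilde_Tsum enn_root_def)
next
  case (real t)
  then have "S_tilde f x = ennreal (sqrt t)"
    by (simp add: S_tilde_Tsum enn_root_def powr_half_sqrt)
  moreover have "sqrt t > \<mu> \<longleftrightarrow> t > \<mu>\<^sup>2"
    using real(1) assms by (metis abs_of_nonneg real_sqrt_abs real_sqrt_less_iff real_sqrt_pow2 power_strict_mono zero_le_numeral zero_less_numeral sqrt_ge_absD)
  ultimately show ?thesis using real assms
    by (simp add: ennreal_less_iff)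
qed

lemma dyadic_countable: "countable {dcube k (x::'a::euclidean_space) | k x. True}"
proof -
  define g where "g = (\<lambda>(k::int, \<phi>::'a \<Rightarrow> int). {y::'a. \<forall>i\<in>Basis. \<lfloor>y\<bullet>i/2 powr (real_of_int k)\<rfloor> = \<phi> i})"
  have "{dcube k x | k x. True} \<subseteq> g ` (UNIV \<times> (Basis \<rightarrow>\<^sub>E UNIV))"
  proof
    fix Q :: "'a set" assume "Q \<in> {dcube k x | k x. True}"
    then obtain k and x :: 'a where Q: "Q = dcube k x" by auto
    have "Q = g (k, restrict (\<lambda>i. \<lfloor>x\<bullet>i/2 powr (real_of_int k)\<rfloor>) Basis)"
      unfolding Q g_def dcube_def by auto
    then show "Q \<in> g ` (UNIV \<times> (Basis \<rightarrow>\<^sub>E UNIV))" by force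
  qed
  moreover have "countable (g ` (UNIV \<times> (Basis \<rightarrow>\<^sub>E (UNIV :: int set))))"
    by (intro countable_image countable_SIGMA countable_PiE) auto
  ultimately show ?thesis by (rule countable_subset)
qed

lemma dyadic_const_measurable:
  fixes h :: "'a::euclidean_space \<Rightarrow> 'b::topological_space"
  assumes "\<And>x y. y \<in> dcube k x \<Longrightarrow> h y = h x"
  shows "h \<in> borel_measurable lebesgue"
proof (rule borel_measurableI)
  fix S :: "'b set" assume "open S"
  have "h -` S \<inter> space lebesgue = \<Union>{dcube k x | x. h x \<in> S}"
  proof (intro equalityI subsetI)
    fix y assume "y \<in> h -` S \<inter> space lebesgue"
    then show "y \<in> \<Union>{dcube k x | x. h x \<in> S}" using mem_dcube[of y k] by blast
  next
    fix y assume "y \<in> \<Union>{dcube k x | x. h x \<in> S}"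
    then obtain x where "y \<in> dcube k x" "h x \<in> S" by blast
    then show "y \<in> h -` S \<inter> space lebesgue" using assms by simp
  qed
  also have "\<dots> \<in> sets lebesgue"
  proof (rule sets.countable_Union)
    show "countable {dcube k x | x. h x \<in> S}"
      by (rule countable_subset[OF _ dyadic_countable]) auto
  qed auto
  finally show "h -` S \<inter> space lebesgue \<in> sets lebesgue" .
qed

lemma Sk_tilde_measurable[measurable]: "Sk_tilde k f \<in> borel_measurable lebesgue"
  by (rule dyadic_const_measurable[of k]) (rule Sk_tilde_eq)

lemma Tsum_measurable[measurable]: "Tsum f \<in> borel_measurable lebesgue"
proof -
  define e where "e = from_nat_into (UNIV :: int set)"
  have bij: "bij_betw e UNIV (UNIV::int set)"
    unfolding e_def by (rule bij_betw_from_nat_into) (auto simp: infinite_UNIV_int)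
  have eq: "Tsum f x = (\<Sum>n. (Sk_tilde (e n) f x)\<^sup>2)" for x
  proof -
    have "Tsum f x = (\<Sum>\<^sub>\<infinity>n\<in>UNIV. (Sk_tilde (e n) f x)\<^sup>2)"
      unfolding Tsum_def by (rule infsum_reindex_bij_betw[OF bij, symmetric])
    also have "\<dots> = (\<Sum>n. (Sk_tilde (e n) f x)\<^sup>2)"
    proof -
      have "((\<lambda>n. (Sk_tilde (e n) f x)\<^sup>2) has_sum (\<Sum>\<^sub>\<infinity>n\<in>UNIV. (Sk_tilde (e n) f x)\<^sup>2)) UNIV"
        by (rule has_sum_infsum) (simp add: nonneg_summable_on_complete)
      then have "(\<lambda>n. (Sk_tilde (e n) f x)\<^sup>2) sums (\<Sum>\<^sub>\<infinity>n\<in>UNIV. (Sk_tilde (e n) f x)\<^sup>2)"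
        by (rule has_sum_imp_sums)
      then show ?thesis by (rule sums_unique)
    qed
    finally show ?thesis .
  qed
  have m: "(\<lambda>x. \<Sum>n. (Sk_tilde (e n) f x)\<^sup>2) \<in> borel_measurable lebesgue"
    by measurable
  show ?thesis using m by (simp add: eq[abs_def] del: )
qed

lemma S_tilde_gt_measurable[measurable]: "\<mu> \<ge> 0 \<Longrightarrow> {x. S_tilde f x > ennreal \<mu>} \<in> sets lebesgue"
proof -
  assume "\<mu> \<ge> 0"
  then have "{x. S_tilde f x > ennreal \<mu>} = {x \<in> space lebesgue. Tsum f x > ennreal (\<mu>\<^sup>2)}"
    by (simp add: S_tilde_gt_iff)
  also have "\<dots> \<in> sets lebesgue" by measurable
  finally show ?thesis .
qed



lemma infsum_ennreal_mono_set:
  fixes h :: "'b \<Rightarrow> ennreal"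
  assumes "A \<subseteq> B" shows "infsum h A \<le> infsum h B"
  by (rule infsum_mono_neutral) (use assms in auto)

lemma infsum_ennreal_mono:
  fixes h g :: "'b \<Rightarrow> ennreal"
  assumes "\<And>x. x \<in> A \<Longrightarrow> h x \<le> g x" shows "infsum h A \<le> infsum g A"
  by (rule infsum_mono_neutral) (use assms in auto)

lemma Tsum_split:
  "Tsum f x = (\<Sum>\<^sub>\<infinity>k\<in>{..m}. (Sk_tilde k f x)\<^sup>2) + (\<Sum>\<^sub>\<infinity>k\<in>{m<..}. (Sk_tilde k f x)\<^sup>2)"
proof -
  have "(UNIV::int set) = {..m} \<union> {m<..}" by auto
  then have "Tsum f x = (\<Sum>\<^sub>\<infinity>k\<in>{..m} \<union> {m<..}. (Sk_tilde k f x)\<^sup>2)"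
    unfolding Tsum_def by simp
  also have "\<dots> = (\<Sum>\<^sub>\<infinity>k\<in>{..m}. (Sk_tilde k f x)\<^sup>2) + (\<Sum>\<^sub>\<infinity>k\<in>{m<..}. (Sk_tilde k f x)\<^sup>2)"
    by (rule infsum_Un_disjoint) auto
  finally show ?thesis .
qed

lemma Tsum_upper_part:
  assumes "y \<in> dcube (m+1) x"
  shows "(\<Sum>\<^sub>\<infinity>k\<in>{m<..}. (Sk_tilde k f x)\<^sup>2) \<le> Tsum f y"
proof -
  have "(\<Sum>\<^sub>\<infinity>k\<in>{m<..}. (Sk_tilde k f x)\<^sup>2) = (\<Sum>\<^sub>\<infinity>k\<in>{m<..}. (Sk_tilde k f y)\<^sup>2)"
  proof (rule infsum_cong)
    fix k assume "k \<in> {m<..}"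
    then have "y \<in> dcube k x" using dcube_mono[of "m+1" k x] assms by auto
    then show "(Sk_tilde k f x)\<^sup>2 = (Sk_tilde k f y)\<^sup>2" by (simp add: Sk_tilde_eq)
  qed
  also have "\<dots> \<le> Tsum f y" unfolding Tsum_def by (rule infsum_ennreal_mono_set) auto
  finally show ?thesis .
qed

lemma Tsum_local:
  assumes "\<And>k. k \<le> m \<Longrightarrow> Sk_tilde k f x = Sk_tilde k g x" and "y \<in> dcube (m+1) x"
  shows "Tsum f x \<le> Tsum g x + Tsum f y"
proof -
  have "(\<Sum>\<^sub>\<infinity>k\<in>{..m}. (Sk_tilde k f x)\<^sup>2) = (\<Sum>\<^sub>\<infinity>k\<in>{..m}. (Sk_tilde k g x)\<^sup>2)"
    by (rule infsum_cong) (use assms(1) in auto)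
  also have "\<dots> \<le> Tsum g x" unfolding Tsum_def by (rule infsum_ennreal_mono_set) auto
  finally show ?thesis using Tsum_split[of f x m] Tsum_upper_part[OF assms(2), of f]
    by (metis add_mono)
qed

lemma Tsum_bound_all_levels:
  assumes "\<And>j. \<exists>y\<in>dcube j x. Tsum f y \<le> b"
  shows "Tsum f x \<le> b"
  unfolding Tsum_def
proof (rule infsum_le_finite_sums)
  show "(\<lambda>k. (Sk_tilde k f x)\<^sup>2) summable_on UNIV" by simp
  fix F :: "int set" assume F: "finite F" "F \<subseteq> UNIV"
  show "(\<Sum>k\<in>F. (Sk_tilde k f x)\<^sup>2) \<le> b"
  proof (cases "F = {}")
    case True then show ?thesis by simp
  next
    case False
    obtain y where y: "y \<in> dcube (Min F) x" "Tsum f y \<le> b" using assms by blast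
    have "(\<Sum>k\<in>F. (Sk_tilde k f x)\<^sup>2) = (\<Sum>k\<in>F. (Sk_tilde k f y)\<^sup>2)"
    proof (rule sum.cong)
      fix k assume "k \<in> F"
      then have "Min F \<le> k" using F by simp
      then have "y \<in> dcube k x" using dcube_mono y(1) by blast
      then show "(Sk_tilde k f x)\<^sup>2 = (Sk_tilde k f y)\<^sup>2" by (simp add: Sk_tilde_eq)
    qed simp
    also have "\<dots> = (\<Sum>\<^sub>\<infinity>k\<in>F. (Sk_tilde k f y)\<^sup>2)" using F by simp
    also have "\<dots> \<le> Tsum f y" unfolding Tsum_def by (rule infsum_ennreal_mono_set) auto
    finally show ?thesis using y(2) by simp
  qed
qed



lemma mem_cube: "y \<in> cube b r \<longleftrightarrow> (\<forall>i\<in>Basis. b\<bullet>i < y\<bullet>i \<and> y\<bullet>i < b\<bullet>i + r)"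
  unfolding cube_def by (auto simp: mem_box ones_inner inner_add_left)

lemma coord_dcube: assumes "y \<in> dcube k x" "i \<in> Basis" shows "\<bar>y\<bullet>i - x\<bullet>i\<bar> < 2 powr k"
proof -
  have "dcorner k y = dcorner k x" using assms(1) by (rule dcorner_eq)
  moreover have "x \<in> dcube k x" by simp
  ultimately show ?thesis using assms unfolding dcube_corner by fastforce
qed

lemma coord_dcube3: assumes "y \<in> dcube3 k x" "i \<in> Basis" shows "\<bar>y\<bullet>i - x\<bullet>i\<bar> < 2 * 2 powr k"
proof -
  define c where "c = 2 powr (real_of_int k)"
  have c: "c > 0" unfolding c_def by simp
  define u where "u = y\<bullet>i / c"
  define v where "v = x\<bullet>i / c"
  have fl: "\<bar>\<lfloor>u\<rfloor> - \<lfloor>v\<rfloor>\<bar> \<le> 1" using assms unfolding dcube3_def u_def v_def c_def by auto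
  have "\<bar>u - v\<bar> < 2"
  proof -
    have "u < \<lfloor>u\<rfloor> + 1" "\<lfloor>u\<rfloor> \<le> u" "v < \<lfloor>v\<rfloor> + 1" "\<lfloor>v\<rfloor> \<le> v" by linarith+
    moreover have "real_of_int \<lfloor>u\<rfloor> \<le> \<lfloor>v\<rfloor> + 1" "real_of_int \<lfloor>v\<rfloor> \<le> \<lfloor>u\<rfloor> + 1" using fl by linarith+
    ultimately show ?thesis by linarith
  qed
  then have "\<bar>y\<bullet>i - x\<bullet>i\<bar> = c * \<bar>u - v\<bar>" "c * \<bar>u - v\<bar> < c * 2"
    using c by (auto simp: u_def v_def field_simps abs_mult_pos)
  then show ?thesis unfolding c_def by simp
qed

definition bigcube :: "int \<Rightarrow> 'a::euclidean_space \<Rightarrow> 'a set" where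
  "bigcube m x0 = cube (dcorner m x0 - (\<Sum>i\<in>Basis. (4 * 2 powr m) *\<^sub>R i)) (9 * 2 powr m)"

lemma bigcube_lebesgue[measurable]: "bigcube m x0 \<in> sets lebesgue"
  by (simp add: bigcube_def)

lemma emeasure_bigcube: "emeasure lebesgue (bigcube m (x0::'a::euclidean_space)) = ennreal ((9 * 2 powr m) ^ DIM('a))"
  unfolding bigcube_def by (rule emeasure_cube) simp

lemma geom1:
  assumes x: "x \<in> dcube m x0" and k: "k \<le> m" and y: "y \<in> dcube3 k x"
    and t: "t \<le> 2 powr (k+1)" and z: "z \<in> ball 0 t"
  shows "y + z \<in> bigcube m x0"
proof -
  let ?a = "dcorner m x0" and ?s = "2 powr m"
  have ks: "2 powr k \<le> ?s" using k by simp
  show ?thesis unfolding bigcube_def mem_cube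
  proof
    fix i :: 'a assume i: "i \<in> Basis"
    have xa: "?a\<bullet>i \<le> x\<bullet>i" "x\<bullet>i < ?a\<bullet>i + ?s" using x i unfolding dcube_corner by auto
    have yx: "\<bar>y\<bullet>i - x\<bullet>i\<bar> < 2 * 2 powr k" by (rule coord_dcube3[OF y i])
    have "\<bar>z\<bullet>i\<bar> \<le> norm z" using i by (rule Basis_le_norm)
    moreover have "norm z < t" using z by simp
    moreover have "t \<le> 2 * 2 powr k" using t by (simp add: powr_add)
    ultimately have zi: "\<bar>z\<bullet>i\<bar> < 2 * 2 powr k" by linarith
    have "(?a - (\<Sum>i\<in>Basis. (4 * ?s) *\<^sub>R i))\<bullet>i = ?a\<bullet>i - 4 * ?s"
      using i by (simp add: inner_diff_left ones_inner)
    moreover have "(y + z)\<bullet>i = y\<bullet>i + z\<bullet>i" by (simp add: inner_add_left)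
    ultimately show "(?a - (\<Sum>i\<in>Basis. (4 * ?s) *\<^sub>R i))\<bullet>i < (y + z)\<bullet>i \<and>
        (y + z)\<bullet>i < (?a - (\<Sum>i\<in>Basis. (4 * ?s) *\<^sub>R i))\<bullet>i + 9 * ?s"
      using xa yx zi ks unfolding abs_less_iff by (intro conjI) linarith+
  qed
qed

lemma geom2:
  assumes x: "x \<in> dcube m x0" and k: "k \<le> m" and y: "y \<in> dcube3 k x"
  shows "dcube k y \<subseteq> bigcube m x0"
proof
  fix y' assume y': "y' \<in> dcube k y"
  let ?a = "dcorner m x0" and ?s = "2 powr m"
  have ks: "2 powr k \<le> ?s" using k by simp
  show "y' \<in> bigcube m x0" unfolding bigcube_def mem_cube
  proof
    fix i :: 'a assume i: "i \<in> Basis"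
    have xa: "?a\<bullet>i \<le> x\<bullet>i" "x\<bullet>i < ?a\<bullet>i + ?s" using x i unfolding dcube_corner by auto
    have yx: "\<bar>y\<bullet>i - x\<bullet>i\<bar> < 2 * 2 powr k" by (rule coord_dcube3[OF y i])
    have y'y: "\<bar>y'\<bullet>i - y\<bullet>i\<bar> < 2 powr k" by (rule coord_dcube[OF y' i])
    have "(?a - (\<Sum>i\<in>Basis. (4 * ?s) *\<^sub>R i))\<bullet>i = ?a\<bullet>i - 4 * ?s"
      using i by (simp add: inner_diff_left ones_inner)
    then show "(?a - (\<Sum>i\<in>Basis. (4 * ?s) *\<^sub>R i))\<bullet>i < y'\<bullet>i \<and>
        y'\<bullet>i < (?a - (\<Sum>i\<in>Basis. (4 * ?s) *\<^sub>R i))\<bullet>i + 9 * ?s"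
      using xa yx y'y ks unfolding abs_less_iff by (intro conjI) linarith+
  qed
qed

lemma dcube_sub_bigcube: "dcube m x0 \<subseteq> bigcube m x0"
proof
  fix x assume x: "x \<in> dcube m x0"
  have "x + 0 \<in> bigcube m x0"
    by (rule geom1[OF x order_refl, of x "2 powr (m+1)"]) (auto simp: dcube3_def)
  then show "x \<in> bigcube m x0" by simp
qed

lemma V2_cong: assumes "\<And>t. t \<in> I \<Longrightarrow> a t = b t" shows "V2 a I = V2 b I"
proof -
  have 1: "(SUP t\<in>I. ennreal \<bar>a t\<bar>) = (SUP t\<in>I. ennreal \<bar>b t\<bar>)"
    using assms by (intro SUP_cong) auto
  have 2: "(SUP (J, ts) \<in> {(J, ts). J \<ge> (1::nat) \<and> (\<forall>j\<le>J. ts j \<in> I) \<and> (\<forall>j<J. ts j < ts (Suc j))}.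
        ennreal (sqrt (\<Sum>j=1..J. \<bar>a (ts j) - a (ts (j - 1))\<bar>\<^sup>2))) =
      (SUP (J, ts) \<in> {(J, ts). J \<ge> (1::nat) \<and> (\<forall>j\<le>J. ts j \<in> I) \<and> (\<forall>j<J. ts j < ts (Suc j))}.
        ennreal (sqrt (\<Sum>j=1..J. \<bar>b (ts j) - b (ts (j - 1))\<bar>\<^sup>2)))"
  proof (rule SUP_cong[OF refl])
    fix p assume p: "p \<in> {(J, ts). J \<ge> (1::nat) \<and> (\<forall>j\<le>J. ts j \<in> I) \<and> (\<forall>j<J. ts j < ts (Suc j))}"
    obtain J ts where pe: "p = (J, ts)" by (cases p)
    have "(\<Sum>j=1..J. \<bar>a (ts j) - a (ts (j - 1))\<bar>\<^sup>2) = (\<Sum>j=1..J. \<bar>b (ts j) - b (ts (j - 1))\<bar>\<^sup>2)"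
      using p pe assms by (intro sum.cong) auto
    then show "(case p of (J, ts) \<Rightarrow> ennreal (sqrt (\<Sum>j=1..J. \<bar>a (ts j) - a (ts (j - 1))\<bar>\<^sup>2))) =
          (case p of (J, ts) \<Rightarrow> ennreal (sqrt (\<Sum>j=1..J. \<bar>b (ts j) - b (ts (j - 1))\<bar>\<^sup>2)))"
      using pe by simp
  qed
  show ?thesis unfolding V2_def using 1 2 by simp
qed



lemma lebesgue_translation_distr:
  "distr lebesgue lebesgue (\<lambda>x. y + x) = (lebesgue :: 'a::euclidean_space measure)"
proof -
  have T: "(\<lambda>x::'a. y + (\<Sum>j\<in>Basis. (1 * (x \<bullet> j)) *\<^sub>R j)) = (\<lambda>x. y + x)"
    by (simp add: euclidean_representation)
  have "lebesgue = density (distr lebesgue lebesgue (\<lambda>x::'a. y + (\<Sum>j\<in>Basis. (1 * (x \<bullet> j)) *\<^sub>R j))) (\<lambda>_. (\<Prod>j\<in>(Basis::'a set). \<bar>1::real\<bar>))"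
    by (rule lebesgue_affine_euclidean) simp
  then show ?thesis unfolding T by (simp add: density_1)
qed

lemma translation_measurable_leb: "(\<lambda>x::'a::euclidean_space. y + x) \<in> lebesgue \<rightarrow>\<^sub>M lebesgue"
proof -
  have T: "(\<lambda>x::'a. y + (\<Sum>j\<in>Basis. (1 * (x \<bullet> j)) *\<^sub>R j)) = (\<lambda>x. y + x)"
    by (simp add: euclidean_representation)
  have "(\<lambda>x::'a. y + (\<Sum>j\<in>Basis. (1 * (x \<bullet> j)) *\<^sub>R j)) \<in> lebesgue \<rightarrow>\<^sub>M lebesgue"
    by (rule lebesgue_affine_measurable) simp
  then show ?thesis unfolding T .
qed

lemma translate_set_integrable:
  fixes f :: "'a::euclidean_space \<Rightarrow> real"
  assumes "set_integrable lebesgue S f"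
  shows "set_integrable lebesgue {z. y + z \<in> S} (\<lambda>z. f (y + z))"
proof -
  let ?F = "\<lambda>u. indicator S u *\<^sub>R f u"
  have int: "integrable lebesgue ?F" using assms by (simp add: set_integrable_def)
  then have meas: "?F \<in> borel_measurable lebesgue" by auto
  have "integrable (distr lebesgue lebesgue (\<lambda>x. y + x)) ?F"
    using int by (simp add: lebesgue_translation_distr)
  then have "integrable lebesgue (\<lambda>x. ?F (y + x))"
    using integrable_distr_eq[OF translation_measurable_leb meas] by simp
  moreover have "(\<lambda>x. ?F (y + x)) = (\<lambda>z. indicator {z. y + z \<in> S} z *\<^sub>R f (y + z))"
    by (auto simp: indicator_def)
  ultimately show ?thesis by (simp add: set_integrable_def)
qed

lemma locally_integrable_measurable:
  fixes f :: "'a::euclidean_space \<Rightarrow> real"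
  assumes "locally_integrable f"
  shows "f \<in> borel_measurable lebesgue"
proof (rule borel_measurable_LIMSEQ_real)
  fix n :: nat
  have "set_integrable lebesgue (cball 0 (real n)) f"
    using assms unfolding locally_integrable_def by simp
  then show "(\<lambda>x. indicator (cball 0 (real n)) x * f x) \<in> borel_measurable lebesgue"
    by (simp add: set_integrable_def borel_measurable_integrable)
next
  fix x :: 'a
  obtain N :: nat where N: "norm x \<le> real N" using real_arch_simple by blast
  have "eventually (\<lambda>n. indicator (cball 0 (real n)) x * f x = f x) sequentially"
    by (rule eventually_sequentiallyI[of N]) (use N in \<open>auto simp: indicator_def\<close>)
  then show "(\<lambda>n. indicator (cball 0 (real n)) x * f x) \<longlonglongrightarrow> f x"
    by (rule tendsto_eventually)
qed

lemma lp_set_integrable: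
  fixes f :: "'a::euclidean_space \<Rightarrow> real"
  assumes f: "f \<in> borel_measurable lebesgue" and S: "S \<in> sets lebesgue"
    and fin: "emeasure lebesgue S < \<infinity>"
    and I: "(\<integral>\<^sup>+ y\<in>S. ennreal (\<bar>f y - c\<bar> powr p) \<partial>lebesgue) < \<infinity>" and p: "p \<ge> 1"
  shows "set_integrable lebesgue S f"
  unfolding set_integrable_def
proof (rule integrableI_bounded)
  show "(\<lambda>x. indicator S x *\<^sub>R f x) \<in> borel_measurable lebesgue" using f S by measurable
  have pt: "ennreal (norm (indicator S x *\<^sub>R f x)) \<le>
      ennreal (\<bar>c\<bar> + 1) * indicator S x + ennreal (\<bar>f x - c\<bar> powr p) * indicator S x" for x
  proof (cases "x \<in> S")
    case True
    have "\<bar>f x\<bar> \<le> \<bar>c\<bar> + 1 + \<bar>f x - c\<bar> powr p"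
    proof (cases "\<bar>f x - c\<bar> \<le> 1")
      case True then show ?thesis by (smt (verit) powr_ge_zero)
    next
      case False
      then have "\<bar>f x - c\<bar> powr 1 \<le> \<bar>f x - c\<bar> powr p" using p by (intro powr_mono) auto
      then show ?thesis by auto
    qed
    then show ?thesis using True by (simp add: ennreal_plus[symmetric] del: ennreal_plus)
  qed simp
  have "(\<integral>\<^sup>+ x. ennreal (norm (indicator S x *\<^sub>R f x)) \<partial>lebesgue) \<le>
      (\<integral>\<^sup>+ x. ennreal (\<bar>c\<bar> + 1) * indicator S x + ennreal (\<bar>f x - c\<bar> powr p) * indicator S x \<partial>lebesgue)"
    by (rule nn_integral_mono) (rule pt)
  also have "\<dots> = ennreal (\<bar>c\<bar> + 1) * emeasure lebesgue S + (\<integral>\<^sup>+ y\<in>S. ennreal (\<bar>f y - c\<bar> powr p) \<partial>lebesgue)"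
    using f S by (subst nn_integral_add) (auto simp: nn_integral_cmult_indicator)
  also have "\<dots> < \<infinity>" using fin I by (simp add: ennreal_mult_less_top)
  finally show "(\<integral>\<^sup>+ x. ennreal (norm (indicator S x *\<^sub>R f x)) \<partial>lebesgue) < \<infinity>" .
qed



lemma avg_shift_gen:
  fixes F G :: "'a::euclidean_space \<Rightarrow> real"
  assumes A: "A \<in> sets lebesgue" "emeasure lebesgue A < \<infinity>" "measure lebesgue A > 0"
    and F: "set_integrable lebesgue A F" and G: "\<And>z. z \<in> A \<Longrightarrow> G z = F z - c"
  shows "(LINT z:A|lebesgue. G z) / measure lebesgue A = (LINT z:A|lebesgue. F z) / measure lebesgue A - c"
proof -
  have ci: "set_integrable lebesgue A (\<lambda>_. c)"
    using A by (intro absolutely_integrable_on_const) (simp add: fmeasurable_def)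
  have "(LINT z:A|lebesgue. G z) = (LINT z:A|lebesgue. F z - c)"
    using A G by (intro set_lebesgue_integral_cong) auto
  also have "\<dots> = (LINT z:A|lebesgue. F z) - (LINT z:A|lebesgue. c)"
    by (rule set_integral_diff(2)[OF F ci])
  also have "(LINT z:A|lebesgue. c) = measure lebesgue A * c"
    using A by (simp add: set_integral_const)
  finally show ?thesis using A(3) by (simp add: field_simps)
qed

context
  fixes f :: "'a::euclidean_space \<Rightarrow> real" and c :: real and m :: int and x0 :: 'a
  assumes fint: "set_integrable lebesgue (bigcube m x0) f"
begin

definition gl :: "'a \<Rightarrow> real" where "gl z = (if z \<in> bigcube m x0 then f z - c else 0)"

lemma ball_avg_shift:
  assumes x: "x \<in> dcube m x0" and k: "k \<le> m" and y: "y \<in> dcube3 k x"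
    and t: "0 < t" "t \<le> 2 powr (k+1)"
  shows "ball_avg t gl y = ball_avg t f y - c"
proof -
  have sub: "ball 0 t \<subseteq> {z. y + z \<in> bigcube m x0}"
    using geom1[OF x k y t(2)] by auto
  have F: "set_integrable lebesgue (ball 0 t) (\<lambda>z. f (y + z))"
    by (rule set_integrable_subset[OF translate_set_integrable[OF fint] _ sub]) simp
  have "(LINT z:ball 0 t|lebesgue. gl (y + z)) / measure lebesgue (ball (0::'a) t) =
      (LINT z:ball 0 t|lebesgue. f (y + z)) / measure lebesgue (ball (0::'a) t) - c"
  proof (rule avg_shift_gen[of "ball 0 t" "\<lambda>z. f (y+z)" "\<lambda>z. gl (y+z)" c, OF _ _ _ F])
    show "measure lebesgue (ball (0::'a) t) > 0" using t content_ball_pos by (simp add: measure_completion)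
    show "emeasure lebesgue (ball (0::'a) t) < \<infinity>" using emeasure_bounded_finite by auto
    fix z assume "z \<in> ball (0::'a) t"
    then show "gl (y + z) = f (y + z) - c" using sub by (auto simp: gl_def)
  qed simp
  then show ?thesis by (simp add: ball_avg_def)
qed

lemma Ek_shift:
  assumes x: "x \<in> dcube m x0" and k: "k \<le> m" and y: "y \<in> dcube3 k x"
  shows "Ek k gl y = Ek k f y - c"
proof -
  have sub: "dcube k y \<subseteq> bigcube m x0" by (rule geom2[OF x k y])
  have F: "set_integrable lebesgue (dcube k y) f"
    by (rule set_integrable_subset[OF fint _ sub]) simp
  have "(LINT z:dcube k y|lebesgue. gl z) / measure lebesgue (dcube k y) =
      (LINT z:dcube k y|lebesgue. f z) / measure lebesgue (dcube k y) - c"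
  proof (rule avg_shift_gen[of "dcube k y" f gl c, OF _ _ _ F])
    show "measure lebesgue (dcube k y) > 0" by (simp add: measure_dcube)
    show "emeasure lebesgue (dcube k y) < \<infinity>" by (simp add: emeasure_dcube)
    fix z assume "z \<in> dcube k y"
    then show "gl z = f z - c" using sub by (auto simp: gl_def)
  qed simp
  then show ?thesis by (simp add: Ek_def avg_def)
qed

lemma Sk_tilde_local:
  assumes x: "x \<in> dcube m x0" and k: "k \<le> m"
  shows "Sk_tilde k gl x = Sk_tilde k f x"
  unfolding Sk_tilde_def
proof (rule SUP_cong[OF refl])
  fix y assume y: "y \<in> dcube3 k x"
  have "\<And>t. t \<in> {2 powr k .. 2 powr (real_of_int k + 1)} \<Longrightarrow> ball_avg t gl y - Ek k gl y = ball_avg t f y - Ek k f y"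
  proof -
    fix t assume t: "t \<in> {2 powr k .. 2 powr (real_of_int k + 1)}"
    have "0 < 2 powr k" by simp
    moreover have "2 powr k \<le> t" using t by simp
    ultimately have "t > 0" by linarith
    then show "ball_avg t gl y - Ek k gl y = ball_avg t f y - Ek k f y"
      using ball_avg_shift[OF x k y] Ek_shift[OF x k y] t by simp
  qed
  then show "Sk k gl y = Sk k f y" unfolding Sk_def by (rule V2_cong)
qed

end



lemma sharp_max_gt_open: "open {x. sharp_max p f x > ennreal r}"
proof -
  define val where "val = (\<lambda>(a, s). (INF c::real. enn_root p ((\<integral>\<^sup>+ y\<in>cube a s. ennreal (\<bar>f y - c\<bar> powr p) \<partial>lebesgue)
                                / emeasure lebesgue (cube a s))))"
  have eq: "{x. sharp_max p f x > ennreal r} = \<Union>{cube a s | a s. s > 0 \<and> val (a, s) > ennreal r}"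
  proof (intro equalityI subsetI)
    fix x assume "x \<in> {x. sharp_max p f x > ennreal r}"
    then have "ennreal r < (SUP (a, s) \<in> {(a, s). s > 0 \<and> x \<in> cube a s}. val (a, s))"
      unfolding sharp_max_def val_def by simp
    then obtain a s where "s > 0" "x \<in> cube a s" "ennreal r < val (a, s)"
      unfolding less_SUP_iff by auto
    then show "x \<in> \<Union>{cube a s | a s. s > 0 \<and> val (a, s) > ennreal r}" by blast
  next
    fix x assume "x \<in> \<Union>{cube a s | a s. s > 0 \<and> val (a, s) > ennreal r}"
    then obtain a s where as: "s > 0" "x \<in> cube a s" "ennreal r < val (a, s)" by blast
    then have "ennreal r < (SUP (a, s) \<in> {(a, s). s > 0 \<and> x \<in> cube a s}. val (a, s))"
      unfolding less_SUP_iff by auto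
    then show "x \<in> {x. sharp_max p f x > ennreal r}"
      unfolding sharp_max_def val_def by simp
  qed
  show ?thesis unfolding eq by (intro open_Union) (auto simp: cube_def)
qed

lemma sharp_max_le_sets[measurable]: "{x. sharp_max p f x \<le> ennreal r} \<in> sets lebesgue"
proof -
  have "closed {x. sharp_max p f x \<le> ennreal r}"
    using sharp_max_gt_open[where p=p and f=f and r=r] unfolding closed_def by (simp add: Compl_eq not_le)
  then have "{x. sharp_max p f x \<le> ennreal r} \<in> sets borel" by (rule borel_closed)
  then show ?thesis by simp
qed

lemma enn_root_less:
  assumes "enn_root p v < ennreal r" "p > 0" "r > 0"
  shows "v < ennreal (r powr p)"
proof (cases v rule: ennreal_cases)
  case top then show ?thesis using assms by (simp add: enn_root_def)
next
  case (real t)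
  then have "t powr (1/p) < r" using assms by (simp add: enn_root_def ennreal_less_iff)
  then have "(t powr (1/p)) powr p < r powr p" using assms by (intro powr_less_mono2) auto
  then have "t < r powr p" using assms real by (simp add: powr_powr)
  then show ?thesis using real by (simp add: ennreal_less_iff)
qed



lemma alg_aux: "(L::real) > 0 \<Longrightarrow> B > 0 \<Longrightarrow> Nn * ((P2 * G * L) * (Nine * D)) / (B * L) = Nn * P2 * Nine * (G / B) * D"
  by (simp add: field_simps)

lemma cube_estimate:
  fixes f :: "'a::euclidean_space \<Rightarrow> real" and p N :: real
  assumes p: "1 \<le> p" and N: "0 \<le> N"
    and weak: "\<And>f::'a::euclidean_space \<Rightarrow> real. \<And>l. Lp_fun p f \<Longrightarrow> l > 0 \<Longrightarrow>
        ennreal (l powr p) * emeasure lebesgue {x. S_tilde f x > ennreal l}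
          \<le> ennreal (N powr p) * (\<integral>\<^sup>+ x. ennreal (\<bar>f x\<bar> powr p) \<partial>lebesgue)"
    and fl: "locally_integrable f" and l: "l > 0" and A: "A > 1" and \<gamma>: "\<gamma> > 0"
    and Q\<Omega>: "dcube m x0 \<subseteq> {x. S_tilde f x > ennreal l}"
    and y: "y \<in> dcube (m+1) x0" "\<not> S_tilde f y > ennreal l"
  shows "measure lebesgue ({x. S_tilde f x > ennreal (A*l) \<and> sharp_max p f x \<le> ennreal (\<gamma>*l)} \<inter> dcube m x0)
          \<le> N powr p * 2 powr p * 9 ^ DIM('a) * (\<gamma>/(A-1)) powr p * measure lebesgue (dcube m x0)"
proof -
  define EQ where "EQ = {x. S_tilde f x > ennreal (A*l) \<and> sharp_max p f x \<le> ennreal (\<gamma>*l)} \<inter> dcube m x0"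
  have Kpos: "0 \<le> N powr p * 2 powr p * 9 ^ DIM('a) * (\<gamma>/(A-1)) powr p * measure lebesgue (dcube m x0)"
    by simp
  show ?thesis
  proof (cases "EQ = {}")
    case True then show ?thesis using Kpos unfolding EQ_def[symmetric] by simp
  next
    case False
    then obtain x1 where x1: "x1 \<in> EQ" by blast
    define Qs where "Qs = bigcube m x0"
    define a' where "a' = dcorner m x0 - (\<Sum>i\<in>Basis. (4 * 2 powr m) *\<^sub>R i)"
    define s' where "s' = 9 * 2 powr (real_of_int m)"
    have Qs_cube: "Qs = cube a' s'" unfolding Qs_def bigcube_def a'_def s'_def by simp
    define \<mu>s where "\<mu>s = (9 * 2 powr (real_of_int m)) ^ DIM('a)"
    have \<mu>s: "\<mu>s > 0" "emeasure lebesgue Qs = ennreal \<mu>s"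
      unfolding \<mu>s_def Qs_def by (simp_all add: emeasure_bigcube)
    define I where "I = (\<lambda>c. (\<integral>\<^sup>+ y\<in>Qs. ennreal (\<bar>f y - c\<bar> powr p) \<partial>lebesgue))"
    have x1Q: "x1 \<in> dcube m x0" "sharp_max p f x1 \<le> ennreal (\<gamma>*l)" "S_tilde f x1 > ennreal (A*l)"
      using x1 unfolding EQ_def by auto
    have x1s: "x1 \<in> cube a' s'" using dcube_sub_bigcube x1Q(1) Qs_cube unfolding Qs_def by auto
    have s'pos: "s' > 0" unfolding s'_def by simp
    have "(INF c::real. enn_root p (I c / emeasure lebesgue Qs)) \<le> sharp_max p f x1"
    proof -
      have "(a', s') \<in> {(a, s). s > 0 \<and> x1 \<in> cube a s}" using x1s s'pos by simp
      then have "(case (a', s') of (a, s) \<Rightarrow> (INF c::real. enn_root p ((\<integral>\<^sup>+ y\<in>cube a s. ennreal (\<bar>f y - c\<bar> powr p) \<partial>lebesgue)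
                                / emeasure lebesgue (cube a s)))) \<le> sharp_max p f x1"
        unfolding sharp_max_def by (rule SUP_upper)
      then show ?thesis unfolding I_def Qs_cube by simp
    qed
    also have "\<dots> < ennreal (2 * \<gamma> * l)"
    proof (rule order.strict_trans1[OF x1Q(2)])
      show "ennreal (\<gamma> * l) < ennreal (2 * \<gamma> * l)" using \<gamma> l by (intro ennreal_lessI) auto
    qed
    finally obtain c where c: "enn_root p (I c / emeasure lebesgue Qs) < ennreal (2 * \<gamma> * l)"
      unfolding INF_less_iff by blast
    have "I c / emeasure lebesgue Qs < ennreal ((2 * \<gamma> * l) powr p)"
      by (rule enn_root_less[OF c]) (use p \<gamma> l in auto)
    then have Ic: "I c < ennreal ((2 * \<gamma> * l) powr p) * ennreal \<mu>s"
      using \<mu>s by (simp add: divide_less_ennreal)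
    have Ifin: "I c < \<infinity>"
    proof (rule order.strict_trans[OF Ic])
      show "ennreal ((2 * \<gamma> * l) powr p) * ennreal \<mu>s < \<infinity>"
        by (simp add: ennreal_mult_less_top)
    qed
    have fm: "f \<in> borel_measurable lebesgue" by (rule locally_integrable_measurable[OF fl])
    have fint: "set_integrable lebesgue (bigcube m x0) f"
      unfolding Qs_def[symmetric]
      by (rule lp_set_integrable[OF fm _ _ _ p, of _ c]) (use \<mu>s Ifin in \<open>auto simp: Qs_def I_def\<close>)
    define g where "g = gl f c m x0"
    have g_eq: "g z = (if z \<in> Qs then f z - c else 0)" for z
      unfolding g_def gl_def[OF fint] Qs_def by simp
    have gpow: "ennreal (\<bar>g z\<bar> powr p) = ennreal (\<bar>f z - c\<bar> powr p) * indicator Qs z" for z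
      using p by (simp add: g_eq indicator_def)
    have gint: "(\<integral>\<^sup>+ x. ennreal (\<bar>g x\<bar> powr p) \<partial>lebesgue) = I c"
      unfolding gpow I_def by simp
    have gLp: "Lp_fun p g"
    proof -
      have "g \<in> borel_measurable lebesgue"
        unfolding g_eq[abs_def] Qs_def using fm by measurable
      then show ?thesis unfolding Lp_fun_def gint using Ifin by simp
    qed
    define l' where "l' = (A - 1) * l"
    have l': "l' > 0" unfolding l'_def using A l by simp
    have W: "ennreal (l' powr p) * emeasure lebesgue {x. S_tilde g x > ennreal l'}
          \<le> ennreal (N powr p) * I c"
      using weak[OF gLp l'] gint by simp
    have sub: "EQ \<subseteq> {x. S_tilde g x > ennreal l'}"
    proof
      fix x assume x: "x \<in> EQ"
      then have xQ: "x \<in> dcube m x0" and xS: "S_tilde f x > ennreal (A*l)" unfolding EQ_def by auto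
      have T1: "Tsum f x > ennreal ((A*l)\<^sup>2)" using xS S_tilde_gt_iff[of "A*l" f x] A l by simp
      have T2: "Tsum f y \<le> ennreal (l\<^sup>2)" using y(2) S_tilde_gt_iff[of l f y] l by (simp add: not_less)
      have "dcube (m+1) x = dcube (m+1) x0"
        using xQ dcube_mono[of m "m+1" x0] by (intro dcube_eq) auto
      then have yx: "y \<in> dcube (m+1) x" using y(1) by simp
      have loc: "Sk_tilde k f x = Sk_tilde k g x" if "k \<le> m" for k
        unfolding g_def using Sk_tilde_local[OF fint xQ that] by simp
      have T3: "Tsum f x \<le> Tsum g x + Tsum f y" by (rule Tsum_local[OF loc yx])
      have "Tsum g x > ennreal (l'\<^sup>2)"
      proof (rule ccontr)
        assume "\<not> Tsum g x > ennreal (l'\<^sup>2)"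
        then have "Tsum g x \<le> ennreal (l'\<^sup>2)" by simp
        then have "Tsum f x \<le> ennreal (l'\<^sup>2) + ennreal (l\<^sup>2)" using T2 T3 by (meson add_mono order_trans)
        also have "\<dots> = ennreal (l'\<^sup>2 + l\<^sup>2)" by (simp add: ennreal_plus)
        also have "\<dots> \<le> ennreal ((A*l)\<^sup>2)"
        proof (rule ennreal_leI)
          have "l'\<^sup>2 + l\<^sup>2 = (A*l)\<^sup>2 - 2*(A-1)*l\<^sup>2" unfolding l'_def by (simp add: power2_eq_square algebra_simps)
          moreover have "2*(A-1)*l\<^sup>2 \<ge> 0" using A by simp
          ultimately show "l'\<^sup>2 + l\<^sup>2 \<le> (A*l)\<^sup>2" by linarith
        qed
        finally show False using T1 by simp
      qed
      then show "x \<in> {x. S_tilde g x > ennreal l'}" using S_tilde_gt_iff[of l' g x] l' by simp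
    qed
    have EQeq: "EQ = {x. S_tilde f x > ennreal (A*l)} \<inter> {x. sharp_max p f x \<le> ennreal (\<gamma>*l)} \<inter> dcube m x0"
      unfolding EQ_def by auto
    have EQm: "EQ \<in> sets lebesgue" unfolding EQeq
      using A l by (intro sets.Int S_tilde_gt_measurable sharp_max_le_sets dcube_lebesgue) simp
    have "emeasure lebesgue EQ \<le> emeasure lebesgue {x. S_tilde g x > ennreal l'}"
      by (rule emeasure_mono[OF sub]) (use l' in simp)
    then have "ennreal (l' powr p) * emeasure lebesgue EQ \<le> ennreal (N powr p) * I c"
      using W by (meson mult_left_mono order_trans zero_le)
    also have "\<dots> \<le> ennreal (N powr p) * (ennreal ((2 * \<gamma> * l) powr p) * ennreal \<mu>s)"
      using Ic by (intro mult_left_mono) auto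
    finally have W2: "ennreal (l' powr p) * emeasure lebesgue EQ \<le> ennreal (N powr p) * (ennreal ((2 * \<gamma> * l) powr p) * ennreal \<mu>s)" .
    have EQfin: "emeasure lebesgue EQ < \<infinity>"
    proof -
      have "EQ \<subseteq> dcube m x0" unfolding EQ_def by blast
      then have "emeasure lebesgue EQ \<le> emeasure lebesgue (dcube m x0)" using dcube_lebesgue by (rule emeasure_mono)
      then show ?thesis unfolding emeasure_dcube by (rule order.strict_trans1) simp
    qed
    define e where "e = measure lebesgue EQ"
    have eE: "emeasure lebesgue EQ = ennreal e" unfolding e_def using EQfin by (intro emeasure_eq_ennreal_measure) auto
    have e0: "e \<ge> 0" unfolding e_def by simp
    have m1: "ennreal (l' powr p) * ennreal e = ennreal (l' powr p * e)" using e0 by (intro ennreal_mult[symmetric]) auto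
    have m2: "ennreal (N powr p) * (ennreal ((2 * \<gamma> * l) powr p) * ennreal \<mu>s) = ennreal (N powr p * ((2 * \<gamma> * l) powr p * \<mu>s))"
      using \<mu>s(1) by (simp add: ennreal_mult[symmetric] del: ennreal_mult')
    have "ennreal (l' powr p * e) \<le> ennreal (N powr p * ((2 * \<gamma> * l) powr p * \<mu>s))"
      using W2 unfolding eE m1 m2 .
    moreover have "0 \<le> N powr p * ((2 * \<gamma> * l) powr p * \<mu>s)" using \<mu>s(1) by simp
    ultimately have W3: "l' powr p * e \<le> N powr p * ((2 * \<gamma> * l) powr p * \<mu>s)"
      using ennreal_le_iff by blast
    have lp: "l' powr p > 0" using l' by simp
    have "e \<le> N powr p * ((2 * \<gamma> * l) powr p * \<mu>s) / l' powr p"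
      using W3 lp by (subst pos_le_divide_eq) (auto simp: mult.commute)
    also have "\<dots> = N powr p * 2 powr p * 9 ^ DIM('a) * (\<gamma>/(A-1)) powr p * (2 powr m) ^ DIM('a)"
    proof -
      have e1: "(2 * \<gamma> * l) powr p = 2 powr p * \<gamma> powr p * l powr p" using \<gamma> l by (simp add: powr_mult)
      have e2: "l' powr p = (A - 1) powr p * l powr p" unfolding l'_def using A l by (simp add: powr_mult)
      have e3: "(\<gamma>/(A-1)) powr p = \<gamma> powr p / (A-1) powr p" using \<gamma> A by (simp add: powr_divide)
      have e4: "\<mu>s = 9 ^ DIM('a) * (2 powr m) ^ DIM('a)" unfolding \<mu>s_def by (simp add: power_mult_distrib)
      have pos: "(A-1) powr p > 0" "l powr p > 0" using A l by auto
      show ?thesis unfolding e1 e2 e3 e4 by (rule alg_aux[OF pos(2) pos(1)])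
    qed
    finally show ?thesis unfolding EQ_def[symmetric] e_def[symmetric] measure_dcube .
  qed
qed



lemma big_dcube_not_sub:
  fixes \<Omega> :: "'a::euclidean_space set"
  assumes \<Omega>: "\<Omega> \<in> sets lebesgue" "emeasure lebesgue \<Omega> < \<infinity>"
  shows "\<exists>j. \<not> dcube j x \<subseteq> \<Omega>"
proof -
  define M where "M = enn2real (emeasure lebesgue \<Omega>)"
  have M: "emeasure lebesgue \<Omega> = ennreal M" "M \<ge> 0"
    using \<Omega>(2) unfolding M_def by (auto simp: ennreal_enn2real_if less_top)
  define j where "j = \<lceil>log 2 (M+1)\<rceil>"
  have "M + 1 = 2 powr (log 2 (M+1))" using M by simp
  also have "\<dots> \<le> 2 powr (real_of_int j)" unfolding j_def by (intro powr_mono) auto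
  finally have j1: "M + 1 \<le> 2 powr (real_of_int j)" .
  have "2 powr (real_of_int j) = (2 powr (real_of_int j)) ^ 1" by simp
  also have "\<dots> \<le> (2 powr (real_of_int j)) ^ DIM('a)"
    using j1 M by (intro power_increasing) (auto simp: DIM_positive Suc_le_eq)
  finally have "M < (2 powr (real_of_int j)) ^ DIM('a)" using j1 by linarith
  then have lt: "emeasure lebesgue \<Omega> < emeasure lebesgue (dcube j x)"
    using M by (simp add: emeasure_dcube ennreal_lessI)
  show ?thesis
  proof (rule exI[of _ j], rule notI)
    assume "dcube j x \<subseteq> \<Omega>"
    then have "emeasure lebesgue (dcube j x) \<le> emeasure lebesgue \<Omega>" using \<Omega>(1) by (rule emeasure_mono)
    then show False using lt by simp
  qed
qed

lemma stopping_level: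
  fixes \<Omega> :: "'a::euclidean_space set"
  assumes \<Omega>: "\<Omega> \<in> sets lebesgue" "emeasure lebesgue \<Omega> < \<infinity>"
    and j0: "dcube j0 x \<subseteq> \<Omega>"
  shows "\<exists>m. dcube m x \<subseteq> \<Omega> \<and> \<not> dcube (m+1) x \<subseteq> \<Omega>"
proof -
  obtain j1 where j1: "\<not> dcube j1 x \<subseteq> \<Omega>" using big_dcube_not_sub[OF \<Omega>] by blast
  have "j0 < j1"
  proof (rule ccontr)
    assume "\<not> j0 < j1"
    then have "dcube j1 x \<subseteq> dcube j0 x" by (intro dcube_mono) simp
    then show False using j0 j1 by blast
  qed
  define P where "P = (\<lambda>n::nat. \<not> dcube (j0 + int n) x \<subseteq> \<Omega>)"
  have Pex: "P (nat (j1 - j0))" unfolding P_def using j1 \<open>j0 < j1\<close> by simp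
  define n where "n = (LEAST n. P n)"
  have Pn: "P n" unfolding n_def using Pex by (rule LeastI)
  have n0: "n \<noteq> 0" using Pn j0 unfolding P_def by auto
  have "\<not> P (n - 1)" unfolding n_def by (rule not_less_Least) (use n0 n_def in simp)
  then have "dcube (j0 + int (n - 1)) x \<subseteq> \<Omega>" unfolding P_def by simp
  moreover have "j0 + int (n - 1) + 1 = j0 + int n" using n0 by simp
  ultimately show ?thesis using Pn unfolding P_def by metis
qed



lemma two_powr_pos: "0 < (2::real) powr x" by simp

lemma wmeasure_alt: "wmeasure w S = (\<integral>\<^sup>+ x. ennreal (w x) * indicator S x \<partial>lebesgue)"
  by (simp add: wmeasure_def)

lemma wmeasure_mono: "S \<subseteq> T \<Longrightarrow> wmeasure w S \<le> wmeasure w T"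
  unfolding wmeasure_alt by (intro nn_integral_mono mult_left_mono) (auto simp: indicator_def)

lemma powr_const_bound:
  fixes K r u \<delta> :: real
  assumes K: "K \<ge> 0" and u: "u \<ge> 0" and r: "0 \<le> r" "r \<le> K * u" and \<delta>: "0 < \<delta>" "\<delta> \<le> 1"
  shows "r powr \<delta> \<le> max 1 K * u powr \<delta>"
proof -
  have "r powr \<delta> \<le> (K * u) powr \<delta>" using r \<delta> K u by (intro powr_mono2) auto
  also have "\<dots> = K powr \<delta> * u powr \<delta>" using K u by (simp add: powr_mult)
  also have "\<dots> \<le> max 1 K * u powr \<delta>"
  proof (rule mult_right_mono)
    show "K powr \<delta> \<le> max 1 K"
    proof (cases "K \<le> 1")
      case True
      then have "K powr \<delta> \<le> 1" using K \<delta> by (intro powr_le1) auto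
      then show ?thesis by simp
    next
      case False
      then have "K powr \<delta> \<le> K powr 1" using \<delta> by (intro powr_mono) auto
      then show ?thesis using False by simp
    qed
  qed simp
  finally show ?thesis .
qed

lemma weighted_cube:
  fixes E :: "'a::euclidean_space set"
  assumes Aw: "A_infty w Cw \<delta>" and \<delta>: "0 < \<delta>" "\<delta> \<le> 1" and Cw: "Cw > 0"
    and K: "K \<ge> 0" and u: "u \<ge> 0"
    and Em: "E \<in> sets lebesgue"
    and bound: "measure lebesgue (E \<inter> dcube m x0) \<le> K * u * measure lebesgue (dcube m x0)"
  shows "wmeasure w (E \<inter> dcube m x0) \<le> ennreal (max 1 K * Cw * u powr \<delta>) * wmeasure w (dcube m x0)"
proof -
  define Q where "Q = dcube m x0"
  define B where "B = cube (dcorner m x0) (2 powr m)"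
  have BQ: "B \<subseteq> Q" unfolding B_def Q_def by (rule box_sub_dcube)
  have wm: "w \<in> borel_measurable lebesgue" using Aw unfolding A_infty_def weight_def by simp
  have Qm: "Q \<in> sets lebesgue" "B \<in> sets lebesgue" unfolding Q_def B_def by simp_all
  have null: "Q - B \<in> null_sets lebesgue" unfolding Q_def B_def by (rule dcube_diff_null)
  have "wmeasure w (E \<inter> Q) \<le> (\<integral>\<^sup>+ x. ennreal (w x) * indicator (E \<inter> B) x + ennreal (w x) * indicator (Q - B) x \<partial>lebesgue)"
    unfolding wmeasure_alt
    by (intro nn_integral_mono) (auto simp: indicator_def)
  also have "\<dots> = wmeasure w (E \<inter> B) + (\<integral>\<^sup>+ x. ennreal (w x) * indicator (Q - B) x \<partial>lebesgue)"
    unfolding wmeasure_alt using wm Em Qm by (intro nn_integral_add) auto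
  also have "(\<integral>\<^sup>+ x. ennreal (w x) * indicator (Q - B) x \<partial>lebesgue) = 0"
    by (rule nn_integral_null_set[OF null])
  finally have w1: "wmeasure w (E \<inter> Q) \<le> wmeasure w (E \<inter> B)" by simp
  have mB: "measure lebesgue B = (2 powr m) ^ DIM('a)" unfolding B_def by (simp add: measure_cube)
  have mQ: "measure lebesgue Q = (2 powr m) ^ DIM('a)" unfolding Q_def by (simp add: measure_dcube)
  have mpos: "(2 powr (real_of_int m)) ^ DIM('a) > 0" by simp
  have EBm: "E \<inter> B \<in> sets lebesgue" using Em Qm by auto
  have "wmeasure w (E \<inter> B) \<le> ennreal (Cw * (measure lebesgue (E \<inter> B) / measure lebesgue B) powr \<delta>) * wmeasure w B"
  proof -
    have "\<forall>a s. 0 < s \<longrightarrow> (\<forall>E. E \<in> sets lebesgue \<longrightarrow> E \<subseteq> cube a s \<longrightarrow>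
        wmeasure w E \<le> ennreal (Cw * (measure lebesgue E / measure lebesgue (cube a s)) powr \<delta>) * wmeasure w (cube a s))"
      using Aw unfolding A_infty_def by blast
    note H = this[rule_format, where a="dcorner m x0" and s="2 powr real_of_int m", OF two_powr_pos]
    have "\<And>E'. E' \<in> sets lebesgue \<Longrightarrow> E' \<subseteq> B \<Longrightarrow>
        wmeasure w E' \<le> ennreal (Cw * (measure lebesgue E' / measure lebesgue B) powr \<delta>) * wmeasure w B"
      unfolding B_def by (rule H)
    then show ?thesis using EBm by blast
  qed
  also have "\<dots> \<le> ennreal (max 1 K * Cw * u powr \<delta>) * wmeasure w Q"
  proof (rule mult_mono)
    have EQf: "E \<inter> Q \<in> fmeasurable lebesgue"
    proof (rule fmeasurableI2[of Q])
      show "Q \<in> fmeasurable lebesgue" unfolding Q_def fmeasurable_def by (simp add: emeasure_dcube)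
    qed (use Em Qm in auto)
    have "measure lebesgue (E \<inter> B) \<le> measure lebesgue (E \<inter> Q)"
      using BQ EBm EQf by (intro measure_mono_fmeasurable) auto
    then have r: "measure lebesgue (E \<inter> B) / measure lebesgue B \<le> K * u"
      using bound mB mQ mpos unfolding Q_def by (simp add: divide_le_eq mult.commute)
    have "(measure lebesgue (E \<inter> B) / measure lebesgue B) powr \<delta> \<le> max 1 K * u powr \<delta>"
      by (rule powr_const_bound[OF K u _ r \<delta>]) simp
    then have "Cw * (measure lebesgue (E \<inter> B) / measure lebesgue B) powr \<delta> \<le> max 1 K * Cw * u powr \<delta>"
      using Cw by (simp add: algebra_simps mult_left_mono)
    then show "ennreal (Cw * (measure lebesgue (E \<inter> B) / measure lebesgue B) powr \<delta>) \<le> ennreal (max 1 K * Cw * u powr \<delta>)"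
      by (rule ennreal_leI)
    show "wmeasure w B \<le> wmeasure w Q" using BQ by (rule wmeasure_mono)
  qed auto
  finally show ?thesis using w1 unfolding Q_def by simp
qed



theorem propositionA1:
  fixes p N :: real
  assumes p: "1 \<le> p" and N: "0 \<le> N"
    and weak: "\<And>f::'a::euclidean_space \<Rightarrow> real. \<And>l. Lp_fun p f \<Longrightarrow> l > 0 \<Longrightarrow>
        ennreal (l powr p) * emeasure lebesgue {x. S_tilde f x > ennreal l}
          \<le> ennreal (N powr p) * (\<integral>\<^sup>+ x. ennreal (\<bar>f x\<bar> powr p) \<partial>lebesgue)"
  shows "\<exists>C>0. \<forall>(w::'a \<Rightarrow> real) Cw \<delta>. Cw > 0 \<longrightarrow> 0 < \<delta> \<longrightarrow> \<delta> \<le> 1 \<longrightarrow> A_infty w Cw \<delta> \<longrightarrow>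
      (\<forall>l A \<gamma> f. l > 0 \<longrightarrow> A > 1 \<longrightarrow> \<gamma> > 0 \<longrightarrow> locally_integrable f \<longrightarrow>
         emeasure lebesgue {x. S_tilde f x > ennreal l} < \<infinity> \<longrightarrow>
         wmeasure w {x. S_tilde f x > ennreal (A * l) \<and> sharp_max p f x \<le> ennreal (\<gamma> * l)}
           \<le> ennreal (C * Cw * (\<gamma> / (A - 1)) powr (p * \<delta>)) * wmeasure w {x. S_tilde f x > ennreal l})"
proof -
  define K where "K = N powr p * 2 powr p * 9 ^ DIM('a)"
  have K: "K \<ge> 0" unfolding K_def by simp
  define C where "C = max 1 K"
  have "C > 0" unfolding C_def by simp
  moreover have "\<forall>(w::'a \<Rightarrow> real) Cw \<delta>. Cw > 0 \<longrightarrow> 0 < \<delta> \<longrightarrow> \<delta> \<le> 1 \<longrightarrow> A_infty w Cw \<delta> \<longrightarrow>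
      (\<forall>l A \<gamma> f. l > 0 \<longrightarrow> A > 1 \<longrightarrow> \<gamma> > 0 \<longrightarrow> locally_integrable f \<longrightarrow>
         emeasure lebesgue {x. S_tilde f x > ennreal l} < \<infinity> \<longrightarrow>
         wmeasure w {x. S_tilde f x > ennreal (A * l) \<and> sharp_max p f x \<le> ennreal (\<gamma> * l)}
           \<le> ennreal (C * Cw * (\<gamma> / (A - 1)) powr (p * \<delta>)) * wmeasure w {x. S_tilde f x > ennreal l})"
  proof (intro allI impI)
    fix w :: "'a \<Rightarrow> real" and Cw \<delta> l A \<gamma> :: real and f :: "'a \<Rightarrow> real"
    assume Cw: "Cw > 0" and \<delta>: "0 < \<delta>" "\<delta> \<le> 1" and Aw: "A_infty w Cw \<delta>"
      and l: "l > 0" and A: "A > 1" and \<gamma>: "\<gamma> > 0" and fl: "locally_integrable f"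
      and fin: "emeasure lebesgue {x. S_tilde f x > ennreal l} < \<infinity>"
    define \<Omega> where "\<Omega> = {x. S_tilde f x > ennreal l}"
    define E where "E = {x. S_tilde f x > ennreal (A * l) \<and> sharp_max p f x \<le> ennreal (\<gamma> * l)}"
    define u where "u = (\<gamma> / (A - 1)) powr p"
    define CC where "CC = C * Cw * (\<gamma> / (A - 1)) powr (p * \<delta>)"
    have u: "u \<ge> 0" unfolding u_def by simp
    have CCu: "max 1 K * Cw * u powr \<delta> = CC"
      unfolding CC_def C_def u_def using \<gamma> A by (simp add: powr_powr)
    have \<Omega>m: "\<Omega> \<in> sets lebesgue" unfolding \<Omega>_def using l by simp
    have \<Omega>fin: "emeasure lebesgue \<Omega> < \<infinity>" unfolding \<Omega>_def by (rule fin)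
    have Eeq: "E = {x. S_tilde f x > ennreal (A*l)} \<inter> {x. sharp_max p f x \<le> ennreal (\<gamma>*l)}"
      unfolding E_def by auto
    have Em: "E \<in> sets lebesgue" unfolding Eeq
      using A l by (intro sets.Int S_tilde_gt_measurable sharp_max_le_sets) simp
    have E\<Omega>: "E \<subseteq> \<Omega>"
    proof
      fix x assume "x \<in> E"
      then have "S_tilde f x > ennreal (A * l)" unfolding E_def by simp
      moreover have "ennreal l \<le> ennreal (A * l)" using A l by (intro ennreal_leI) simp
      ultimately show "x \<in> \<Omega>" unfolding \<Omega>_def by simp
    qed
    define \<Q> where "\<Q> = {dcube m x | m x. dcube m x \<subseteq> \<Omega> \<and> \<not> dcube (m+1) x \<subseteq> \<Omega>}"
    have \<Q>count: "countable \<Q>" unfolding \<Q>_def by (rule countable_subset[OF _ dyadic_countable]) auto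
    have \<Q>sets: "Q \<in> sets lebesgue" if "Q \<in> \<Q>" for Q using that unfolding \<Q>_def by auto
    have cover: "\<Omega> = \<Union>\<Q>"
    proof (intro equalityI subsetI)
      fix x assume x: "x \<in> \<Omega>"
      show "x \<in> \<Union>\<Q>"
      proof (cases "\<exists>j0. dcube j0 x \<subseteq> \<Omega>")
        case True
        then obtain j0 where "dcube j0 x \<subseteq> \<Omega>" by blast
        from stopping_level[OF \<Omega>m \<Omega>fin this] obtain m where
          "dcube m x \<subseteq> \<Omega>" "\<not> dcube (m+1) x \<subseteq> \<Omega>" by blast
        then have "dcube m x \<in> \<Q>" unfolding \<Q>_def by blast
        then show ?thesis using mem_dcube[of x m] by blast
      next
        case False
        have "\<exists>y\<in>dcube j x. Tsum f y \<le> ennreal (l\<^sup>2)" for j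
        proof -
          obtain y where "y \<in> dcube j x" "y \<notin> \<Omega>" using False by blast
          then have "\<not> Tsum f y > ennreal (l\<^sup>2)" using S_tilde_gt_iff[of l f y] l unfolding \<Omega>_def by simp
          then show ?thesis using \<open>y \<in> dcube j x\<close> by (auto simp: not_less)
        qed
        then have "Tsum f x \<le> ennreal (l\<^sup>2)" by (rule Tsum_bound_all_levels)
        then have "x \<notin> \<Omega>" using S_tilde_gt_iff[of l f x] l unfolding \<Omega>_def by (simp add: not_less)
        then show ?thesis using x by simp
      qed
    next
      fix x assume "x \<in> \<Union>\<Q>"
      then show "x \<in> \<Omega>" unfolding \<Q>_def by blast
    qed
    have disj: "Q1 \<inter> Q2 = {}" if Q1: "Q1 \<in> \<Q>" and Q2: "Q2 \<in> \<Q>" and ne: "Q1 \<noteq> Q2" for Q1 Q2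
    proof (rule ccontr)
      assume "Q1 \<inter> Q2 \<noteq> {}"
      then obtain z where z: "z \<in> Q1" "z \<in> Q2" by blast
      obtain m1 x1 where q1: "Q1 = dcube m1 x1" "dcube m1 x1 \<subseteq> \<Omega>" "\<not> dcube (m1+1) x1 \<subseteq> \<Omega>"
        using Q1 unfolding \<Q>_def by blast
      obtain m2 x2 where q2: "Q2 = dcube m2 x2" "dcube m2 x2 \<subseteq> \<Omega>" "\<not> dcube (m2+1) x2 \<subseteq> \<Omega>"
        using Q2 unfolding \<Q>_def by blast
      have e1: "dcube k x1 = dcube k z" if "m1 \<le> k" for k
        using dcube_mono[OF that, of x1] z q1 by (metis dcube_eq subsetD)
      have e2: "dcube k x2 = dcube k z" if "m2 \<le> k" for k
        using dcube_mono[OF that, of x2] z q2 by (metis dcube_eq subsetD)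
      consider "m1 = m2" | "m1 < m2" | "m2 < m1" by linarith
      then show False
      proof cases
        case 1 then show False using e1[of m1] e2[of m2] q1 q2 ne by simp
      next
        case 2
        then have "dcube (m1+1) z \<subseteq> dcube m2 z" by (intro dcube_mono) simp
        then show False using e1[of "m1+1"] e2[of m2] q1 q2 2 by simp
      next
        case 3
        then have "dcube (m2+1) z \<subseteq> dcube m1 z" by (intro dcube_mono) simp
        then show False using e2[of "m2+1"] e1[of m1] q1 q2 3 by simp
      qed
    qed
    have percube: "wmeasure w (E \<inter> Q) \<le> ennreal CC * wmeasure w Q" if Q: "Q \<in> \<Q>" for Q
    proof -
      obtain m x0 where q: "Q = dcube m x0" "dcube m x0 \<subseteq> \<Omega>" "\<not> dcube (m+1) x0 \<subseteq> \<Omega>"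
        using Q unfolding \<Q>_def by blast
      obtain y where y: "y \<in> dcube (m+1) x0" "y \<notin> \<Omega>" using q(3) by blast
      have "measure lebesgue (E \<inter> dcube m x0) \<le> K * u * measure lebesgue (dcube m x0)"
        unfolding E_def K_def u_def
        by (rule cube_estimate[OF p N weak fl l A \<gamma>]) (use q y in \<open>auto simp: \<Omega>_def\<close>)
      from weighted_cube[OF Aw \<delta> Cw K u Em this]
      show ?thesis unfolding CCu q(1) .
    qed
    define Mw where "Mw = density lebesgue (\<lambda>x. ennreal (w x))"
    have wm: "w \<in> borel_measurable lebesgue" using Aw unfolding A_infty_def weight_def by simp
    have wM: "wmeasure w S = emeasure Mw S" if "S \<in> sets lebesgue" for S
      unfolding Mw_def wmeasure_def using wm that by (simp add: emeasure_density)
    have EQ: "E = (\<Union>Q\<in>\<Q>. E \<inter> Q)" using E\<Omega> cover by blast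
    have "wmeasure w E = emeasure Mw (\<Union>Q\<in>\<Q>. E \<inter> Q)" using wM[OF Em] EQ by simp
    also have "\<dots> = (\<integral>\<^sup>+Q. emeasure Mw (E \<inter> Q) \<partial>count_space \<Q>)"
    proof (rule emeasure_UN_countable)
      show "\<And>Q. Q \<in> \<Q> \<Longrightarrow> E \<inter> Q \<in> sets Mw" unfolding Mw_def using Em \<Q>sets by auto
      show "disjoint_family_on (\<lambda>Q. E \<inter> Q) \<Q>"
        unfolding disjoint_family_on_def using disj by blast
    qed (rule \<Q>count)
    also have "\<dots> \<le> (\<integral>\<^sup>+Q. ennreal CC * emeasure Mw Q \<partial>count_space \<Q>)"
    proof (rule nn_integral_mono)
      fix Q assume "Q \<in> space (count_space \<Q>)"
      then have Q: "Q \<in> \<Q>" by simp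
      show "emeasure Mw (E \<inter> Q) \<le> ennreal CC * emeasure Mw Q"
        using percube[OF Q] wM[of "E \<inter> Q"] wM[of Q] Em \<Q>sets[OF Q] by auto
    qed
    also have "\<dots> = ennreal CC * (\<integral>\<^sup>+Q. emeasure Mw Q \<partial>count_space \<Q>)"
      by (rule nn_integral_cmult) simp
    also have "(\<integral>\<^sup>+Q. emeasure Mw Q \<partial>count_space \<Q>) = emeasure Mw (\<Union>Q\<in>\<Q>. Q)"
    proof (rule emeasure_UN_countable[symmetric])
      show "\<And>Q. Q \<in> \<Q> \<Longrightarrow> Q \<in> sets Mw" unfolding Mw_def using \<Q>sets by auto
      show "disjoint_family_on (\<lambda>Q. Q) \<Q>"
        unfolding disjoint_family_on_def using disj by blast
    qed (rule \<Q>count)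
    also have "emeasure Mw (\<Union>Q\<in>\<Q>. Q) = wmeasure w \<Omega>" using wM[OF \<Omega>m] cover by simp
    finally show "wmeasure w {x. S_tilde f x > ennreal (A * l) \<and> sharp_max p f x \<le> ennreal (\<gamma> * l)}
           \<le> ennreal (C * Cw * (\<gamma> / (A - 1)) powr (p * \<delta>)) * wmeasure w {x. S_tilde f x > ennreal l}"
      unfolding E_def[symmetric] \<Omega>_def[symmetric] CC_def[symmetric] .
  qed
  ultimately show ?thesis by blast
qed


end
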